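(* Let $0\le\alpha<\pi/2$ and let $H\in\mathbb{M}_n(\mathbb{M}_k)$ satisfy $W(H)\subseteq S_\alpha$. Then \[ \left(\frac{\mathrm{tr}\,|\mathrm{det}_1 H|}{k}\right)^k\ge (\cos\alpha)^{nk}|\det H| \quad\text{and}\quad \left(\frac{\mathrm{tr}\,|\mathrm{det}_2 H|}{n}\right)^n\ge (\cos\alpha)^{nk}|\det H|. \]
   Context: $\mathbb{M}_n(\mathbb{M}_k)$ denotes the set of $nk\times nk$ complex matrices partitioned as $H=[H_{i,j}]_{i,j=1}^n$ with each block $H_{i,j}=[h^{i,j}_{l,m}]_{l,m=1}^k$ a $k\times k$ complex matrix. For $1\le l,m\le k$ let $G_{l,m}=[h^{i,j}_{l,m}]_{i,j=1}^n\in\mathbb{M}_n$. The partial determinants are $\mathrm{det}_1 H=[\det G_{l,m}]_{l,m=1}^k\in\mathbb{M}_k$ and $\mathrm{det}_2 H=[\det H_{i,j}]_{i,j=1}^n\in\mathbb{M}_n$. Here, for a matrix $A$, $|A|$ denotes the matrix whose entries are the absolute values of the entries of $A$ (so $\mathrm{tr}|\mathrm{det}_2H|=\sum_i|\det H_{i,i}|$). The numerical range of $A\in\mathbb{M}_p$ is $W(A)=\{x^*Ax: x\in\mathbb{C}^p, x^*x=1\}$, and for $\alpha\in[0,\pi/2)$, $S_\alpha=\{z\in\mathbb{C}: \Re z>0,\ |\Im z|\le (\Re z)\tan\alpha\}$. *)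

theory Defs
  imports "HOL-Analysis.Analysis"
begin

text \<open>Block matrices in M_n(M_k) are represented as square matrices over the
finite index type 'n \<times> 'k: the entry h^{i,j}_{l,m} (block (i,j), entry (l,m)) is
H $ (i,l) $ (j,m).  n = CARD('n), k = CARD('k).\<close>

definition numerical_range :: "complex ^'m ^'m \<Rightarrow> complex set" where
  "numerical_range A =
     {(\<Sum>i\<in>UNIV. \<Sum>j\<in>UNIV. cnj (x $ i) * A $ i $ j * x $ j) | x :: complex ^'m.
        (\<Sum>i\<in>UNIV. cmod (x $ i) ^ 2) = 1}"

definition sector :: "real \<Rightarrow> complex set" where
  "sector \<alpha> = {z. Re z > 0 \<and> \<bar>Im z\<bar> \<le> Re z * tan \<alpha>}"

definition block :: "complex ^('n::finite \<times> 'k::finite) ^('n \<times> 'k) \<Rightarrow> 'n \<Rightarrow> 'n \<Rightarrow> complex ^'k ^'k" where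
  "block H i j = (\<chi> l m. H $ (i,l) $ (j,m))"

definition Gmat :: "complex ^('n::finite \<times> 'k::finite) ^('n \<times> 'k) \<Rightarrow> 'k \<Rightarrow> 'k \<Rightarrow> complex ^'n ^'n" where
  "Gmat H l m = (\<chi> i j. H $ (i,l) $ (j,m))"

definition det1 :: "complex ^('n::finite \<times> 'k::finite) ^('n \<times> 'k) \<Rightarrow> complex ^'k ^'k" where
  "det1 H = (\<chi> l m. det (Gmat H l m))"

definition det2 :: "complex ^('n::finite \<times> 'k::finite) ^('n \<times> 'k) \<Rightarrow> complex ^'n ^'n" where
  "det2 H = (\<chi> i j. det (block H i j))"

definition abs_mat :: "complex ^'m ^'m \<Rightarrow> real ^'m ^'m" where
  "abs_mat A = (\<chi> i j. cmod (A $ i $ j))"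

definition mtrace :: "'a::comm_ring_1 ^'m ^'m \<Rightarrow> 'a" where
  "mtrace A = (\<Sum>i\<in>UNIV. A $ i $ i)"

end

theory Submission
  imports Defs
begin


definition ip :: "complex^'m \<Rightarrow> complex^'m \<Rightarrow> complex" where
  "ip u v = (\<Sum>i\<in>UNIV. cnj (u$i) * v$i)"
definition qf :: "complex^'m^'m \<Rightarrow> complex^'m \<Rightarrow> complex" where
  "qf M x = ip x (M *v x)"
definition ct :: "complex^'m^'m \<Rightarrow> complex^'m^'m" where
  "ct M = (\<chi> i j. cnj (M$j$i))"
definition pad :: "complex^'m^'m \<Rightarrow> 'm set \<Rightarrow> complex^'m^'m" where
  "pad M P = (\<chi> i j. if i \<in> P \<and> j \<in> P then M$i$j else if i = j then 1 else 0)"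
definition pd :: "complex^'m^'m \<Rightarrow> bool" where
  "pd M \<longleftrightarrow> ct M = M \<and> (\<forall>x. x \<noteq> 0 \<longrightarrow> 0 < Re (qf M x))"
definition colrep :: "complex^'m^'m \<Rightarrow> 'm \<Rightarrow> complex^'m \<Rightarrow> complex^'m^'m" where
  "colrep A t v = (\<chi> i j. if j = t then v$i else A$i$j)"

lemma mdl1: "(if c then 1 else 0) * (x::'a::semiring_1) = (if c then x else 0)" by simp
lemma mdl2: "(x::'a::semiring_1) * (if c then 1 else 0) = (if c then x else 0)" by simp
lemma mdl3: "(x::'a::semiring_0) * (if c then y else 0) = (if c then x * y else 0)" by simp
lemma mdl4: "(if c then y else 0) * (x::'a::semiring_0) = (if c then y * x else 0)" by simp
lemmas dsimps = mdl1 mdl2 mdl3 mdl4 sum.delta sum.delta'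

lemma vec_eqI: "(\<And>i. x$i = y$i) \<Longrightarrow> x = y" by (simp add: vec_eq_iff)

lemma det_colrep_id: fixes v :: "complex^'m" shows "det (colrep (mat 1) t v) = v$t"
proof -
  have "det (\<chi> i j. if j = t then (mat 1 *v v)$i else (mat 1 :: complex^'m^'m)$i$j) = v$t * det (mat 1 :: complex^'m^'m)"
    by (rule cramer_lemma)
  moreover have "mat 1 *v v = v" by simp
  ultimately show ?thesis unfolding colrep_def by (metis det_I mult_1_right)
qed

lemma mult_colrep: "A ** colrep (mat 1) t v = colrep A t (A *v v)"
  unfolding vec_eq_iff matrix_matrix_mult_def colrep_def matrix_vector_mult_def mat_def
  by (simp add: mdl1 mdl2)

lemma pad_UNIV[simp]: "pad M UNIV = M"
  by (simp add: pad_def vec_eq_iff)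

lemma pad_empty[simp]: "pad M {} = mat 1"
  by (simp add: pad_def vec_eq_iff mat_def)

lemma schur_step:
  fixes M :: "complex^'m^'m"
  assumes tP: "t \<in> P" and wt: "w$t = 1" and wP: "\<forall>i. i \<notin> P \<longrightarrow> w$i = 0"
    and orth: "\<forall>i\<in>P-{t}. (M *v w)$i = 0"
  shows "det (pad M P) = det (pad M (P - {t})) * (M *v w)$t"
proof -
  define N where "N = pad M P"
  define s where "s = (M *v w)$t"
  define e :: "complex^'m" where "e = (\<chi> i. if i = t then 1 else 0)"
  have 1: "N *v w = s *s e"
  proof (rule vec_eqI)
    fix i
    show "(N *v w)$i = (s *s e)$i"
    proof (cases "i \<in> P")
      case True
      have "(N *v w)$i = (\<Sum>j\<in>UNIV. M$i$j * w$j)"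
        unfolding matrix_vector_mult_def N_def pad_def
        using True wP by (auto intro!: sum.cong)
      also have "\<dots> = (M *v w)$i" by (simp add: matrix_vector_mult_def)
      finally show ?thesis using True orth by (auto simp: e_def s_def)
    next
      case False
      have "(N *v w)$i = w$i"
        unfolding matrix_vector_mult_def N_def pad_def
        using False by (simp add: dsimps)
      also have "\<dots> = 0" using False wP by simp
      finally show ?thesis using False tP by (auto simp: e_def)
    qed
  qed
  have 2: "det N = det (colrep N t (s *s e))"
  proof -
    have "det (N ** colrep (mat 1) t w) = det N * det (colrep (mat 1) t w)" by (rule det_mul)
    then show ?thesis by (simp add: mult_colrep det_colrep_id wt 1)
  qed
  define A where "A = colrep N t e"
  have 3: "colrep N t (s *s e) = (\<chi> i j. if j = t then (A *v (s *s e))$i else A$i$j)"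
  proof -
    have "A *v (s *s e) = s *s e"
      unfolding vec_eq_iff A_def colrep_def matrix_vector_mult_def e_def
      by (simp add: dsimps)
    then show ?thesis by (simp add: A_def colrep_def vec_eq_iff)
  qed
  have 4: "det (colrep N t (s *s e)) = s * det A"
    unfolding 3 cramer_lemma by (simp add: e_def)
  have Ait: "\<And>i. A$i$t = (if i = t then 1 else 0)" by (simp add: A_def colrep_def e_def)
  have Aij: "\<And>i j. j \<noteq> t \<Longrightarrow> A$i$j = pad M P $i$j" by (simp add: A_def colrep_def N_def)
  define V :: "complex^'m^'m" where
    "V = (\<chi> k j. if k = t then (if j = t then 0 else A$t$j) else 0)"
  define U where "U = mat 1 - V"
  have AV: "\<And>i j. (A ** V)$i$j = (if i = t \<and> j \<noteq> t then A$t$j else 0)"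
    unfolding matrix_matrix_mult_def V_def by (simp add: dsimps Ait)
  have AU: "A ** U = A - A ** V"
    unfolding U_def vec_eq_iff matrix_matrix_mult_def
    by (simp add: ring_distribs sum_subtractf mat_def dsimps)
  have 5: "pad M (P - {t}) = A ** U"
    unfolding AU vec_eq_iff
  proof (intro allI)
    fix i j
    show "pad M (P - {t}) $ i $ j = (A - A ** V) $ i $ j"
      using Ait[of i] Aij[of j i] AV[of i j] Aij[of j t] tP
      by (cases "j = t"; cases "i = t") (auto simp: pad_def)
  qed
  have 6: "det U = 1"
  proof -
    have "transpose U = colrep (mat 1) t (\<chi> k. if k = t then 1 else - A$t$k)"
      by (auto simp: vec_eq_iff U_def V_def transpose_def colrep_def mat_def)
    then have "det (transpose U) = 1" by (simp add: det_colrep_id)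
    then show ?thesis by simp
  qed
  have "det (pad M (P - {t})) = det A" using 5 6 by (simp add: det_mul)
  then show ?thesis using 2 4 by (simp add: N_def s_def)
qed



lemma ip_cnj: "ip v u = cnj (ip u v)"
  by (simp add: ip_def mult.commute)

lemma ip_mat: "ip u (M *v v) = ip (ct M *v u) v"
proof -
  have "ip u (M *v v) = (\<Sum>i\<in>UNIV. \<Sum>j\<in>UNIV. cnj (u$i) * M$i$j * v$j)"
    by (simp add: ip_def matrix_vector_mult_def sum_distrib_left mult.assoc)
  also have "\<dots> = (\<Sum>j\<in>UNIV. \<Sum>i\<in>UNIV. cnj (u$i) * M$i$j * v$j)"
    by (rule sum.swap)
  also have "\<dots> = ip (ct M *v u) v"
    by (simp add: ip_def matrix_vector_mult_def ct_def sum_distrib_right sum_distrib_left mult_ac)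
  finally show ?thesis .
qed

lemma herm_qf_real: "ct M = M \<Longrightarrow> Im (qf M x) = 0"
proof -
  assume h: "ct M = M"
  have "qf M x = ip (ct M *v x) x" unfolding qf_def by (rule ip_mat)
  also have "\<dots> = cnj (qf M x)" unfolding h qf_def by (rule ip_cnj)
  finally have "Im (qf M x) = Im (cnj (qf M x))" by simp
  then show ?thesis by simp
qed

lemma ip_add_left: "ip (a + b) c = ip a c + ip b c"
  by (simp add: ip_def sum.distrib ring_distribs)
lemma ip_add_right: "ip c (a + b) = ip c a + ip c b"
  by (simp add: ip_def sum.distrib ring_distribs)
lemma ip_diff_left: "ip (a - b) c = ip a c - ip b c"
  by (simp add: ip_def sum_subtractf ring_distribs)
lemma ip_diff_right: "ip c (a - b) = ip c a - ip c b"
  by (simp add: ip_def sum_subtractf ring_distribs)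
lemma ip_smult_left: "ip (k *s a) c = cnj k * ip a c"
  by (simp add: ip_def sum_distrib_left mult_ac)
lemma ip_smult_right: "ip c (k *s a) = k * ip c a"
  by (simp add: ip_def sum_distrib_left mult_ac)
lemma mv_smult: "M *v (k *s x) = k *s (M *v (x::complex^'m))"
  by (simp add: vec_eq_iff matrix_vector_mult_def sum_distrib_left mult_ac)

lemma ip_self_zero: "ip x x = 0 \<Longrightarrow> x = 0"
proof -
  assume h: "ip x x = 0"
  have e1: "\<And>z. cnj z * z = of_real ((cmod z)^2)"
    by (metis complex_norm_square mult.commute of_real_power)
  have e: "ip x x = of_real (\<Sum>i\<in>UNIV. (cmod (x$i))^2)"
    unfolding ip_def e1 by simp
  have "(\<Sum>i\<in>UNIV. (cmod (x$i))^2) = 0" using h e of_real_eq_0_iff by metis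
  then have "\<forall>i\<in>UNIV. (cmod (x$i))^2 = 0"
    by (subst (asm) sum_nonneg_eq_0_iff) auto
  then show "x = 0" by (simp add: vec_eq_iff)
qed

lemma pad_mv_out: "i \<notin> S \<Longrightarrow> (pad M S *v y)$i = y$i"
  unfolding pad_def matrix_vector_mult_def by (simp add: dsimps)

lemma pad_mv_in:
  assumes "i \<in> S" "\<forall>j. j \<notin> S \<longrightarrow> y$j = 0"
  shows "(pad M S *v y)$i = (M *v y)$i"
  unfolding pad_def matrix_vector_mult_def using assms by (auto intro!: sum.cong)

lemma ortho_exists:
  fixes M :: "complex^'m^'m"
  assumes tP: "t \<in> P" and nz: "det (pad M (P - {t})) \<noteq> 0"
  shows "\<exists>w. w$t = 1 \<and> (\<forall>i. i \<notin> P \<longrightarrow> w$i = 0) \<and> (\<forall>i\<in>P-{t}. (M *v w)$i = 0)"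
proof -
  define N where "N = pad M (P - {t})"
  from nz obtain N' where N': "N ** N' = mat 1"
    unfolding N_def invertible_det_nz[symmetric] invertible_def by blast
  define b :: "complex^'m" where "b = (\<chi> i. if i \<in> P - {t} then - M$i$t else 0)"
  define y where "y = N' *v b"
  have Ny: "N *v y = b" unfolding y_def matrix_vector_mul_assoc N' by simp
  have yout: "\<And>i. i \<notin> P - {t} \<Longrightarrow> y$i = 0"
  proof -
    fix i assume i: "i \<notin> P - {t}"
    have "y$i = (N *v y)$i" unfolding N_def using pad_mv_out[OF i] by simp
    then show "y$i = 0" using Ny i by (auto simp: b_def)
  qed
  define w :: "complex^'m" where "w = (\<chi> i. if i = t then 1 else y$i)"
  have "w$t = 1" by (simp add: w_def)
  moreover have "\<forall>i. i \<notin> P \<longrightarrow> w$i = 0" using yout tP by (auto simp: w_def)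
  moreover have "\<forall>i\<in>P-{t}. (M *v w)$i = 0"
  proof
    fix i assume i: "i \<in> P - {t}"
    have "w = y + (\<chi> j. if j = t then 1 else 0)"
      using yout by (auto simp: vec_eq_iff w_def)
    then have "(M *v w)$i = (M *v y)$i + M$i$t"
      by (simp add: matrix_vector_right_distrib matrix_vector_mult_def distrib_left sum.distrib dsimps)
    also have "(M *v y)$i = (N *v y)$i"
      unfolding N_def using pad_mv_in[OF i, of y M] yout by auto
    finally show "(M *v w)$i = 0" using Ny i by (simp add: b_def)
  qed
  ultimately show ?thesis by blast
qed

lemma qf_ortho:
  assumes "w$t = 1" "\<forall>i. i \<notin> P \<longrightarrow> w$i = 0" "\<forall>i\<in>P-{t}. (M *v w)$i = 0"
  shows "qf M w = (M *v w)$t"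
proof -
  have "qf M w = (\<Sum>i\<in>UNIV. if i = t then (M *v w)$t else 0)"
    unfolding qf_def ip_def using assms by (intro sum.cong) auto
  then show ?thesis by (simp add: dsimps)
qed

definition posr :: "complex \<Rightarrow> bool" where "posr z \<longleftrightarrow> Im z = 0 \<and> Re z > 0"

lemma posr_mult: "posr a \<Longrightarrow> posr b \<Longrightarrow> posr (a * b)"
  by (simp add: posr_def)

lemma pd_qf_posr: "pd M \<Longrightarrow> x \<noteq> 0 \<Longrightarrow> posr (qf M x)"
  unfolding pd_def posr_def using herm_qf_real by blast

lemma pd_det_pos: assumes pdM: "pd M" shows "posr (det (pad M P))"
  using finite[of P]
proof (induct P rule: finite_induct)
  case empty then show ?case by (simp add: posr_def)
next
  case (insert t P)
  have e: "insert t P - {t} = P" using insert by auto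
  have "det (pad M P) \<noteq> 0" using insert by (auto simp: posr_def)
  then obtain w where w: "w$t = 1" "\<forall>i. i \<notin> insert t P \<longrightarrow> w$i = 0" "\<forall>i\<in>insert t P-{t}. (M *v w)$i = 0"
    using ortho_exists[of t "insert t P" M] e by auto
  have "det (pad M (insert t P)) = det (pad M P) * qf M w"
    using schur_step[of t "insert t P" w M] w qf_ortho[OF w] e by simp
  moreover have "w \<noteq> 0" using w(1) by auto
  then have "posr (qf M w)" using pd_qf_posr[OF pdM] by blast
  ultimately show ?case using insert posr_mult by simp
qed

lemma ratio_exists:
  assumes "pd M" "t \<in> P"
  shows "\<exists>w. w$t = 1 \<and> (\<forall>i. i \<notin> P \<longrightarrow> w$i = 0) \<and> (\<forall>i\<in>P-{t}. (M *v w)$i = 0)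
     \<and> det (pad M P) = det (pad M (P - {t})) * qf M w"
proof -
  have "posr (det (pad M (P - {t})))" by (rule pd_det_pos[OF assms(1)])
  then have "det (pad M (P - {t})) \<noteq> 0" by (auto simp: posr_def)
  then obtain w where w: "w$t = 1" "\<forall>i. i \<notin> P \<longrightarrow> w$i = 0" "\<forall>i\<in>P-{t}. (M *v w)$i = 0"
    using ortho_exists[OF assms(2)] by blast
  then show ?thesis using schur_step[OF assms(2) w] qf_ortho[OF w] by metis
qed

lemma qf_min:
  assumes pd: "pd M" and w0: "w0$t = 1" "\<forall>i. i \<notin> P \<longrightarrow> w0$i = 0" "\<forall>i\<in>P-{t}. (M *v w0)$i = 0"
    and w: "w$t = 1" "\<forall>i. i \<notin> P \<longrightarrow> w$i = 0"
  shows "Re (qf M w0) \<le> Re (qf M w)"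
proof -
  define d where "d = w - w0"
  have wd: "w = w0 + d" by (simp add: d_def)
  have d0: "\<And>i. i \<notin> P - {t} \<Longrightarrow> d$i = 0" using w0 w by (auto simp: d_def)
  have c1: "ip d (M *v w0) = 0"
    unfolding ip_def
  proof (intro sum.neutral ballI)
    fix i show "cnj (d$i) * (M *v w0)$i = 0"
      using d0[of i] w0(3) by (cases "i \<in> P - {t}") auto
  qed
  have hM: "ct M = M" using pd by (simp add: pd_def)
  have "ip w0 (M *v d) = ip (ct M *v w0) d" by (rule ip_mat)
  also have "\<dots> = cnj (ip d (M *v w0))" unfolding hM by (rule ip_cnj)
  finally have c2: "ip w0 (M *v d) = 0" using c1 by simp
  have "qf M w = qf M w0 + ip w0 (M *v d) + ip d (M *v w0) + qf M d"
    unfolding qf_def wd by (simp add: matrix_vector_right_distrib ip_add_left ip_add_right)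
  then have e: "qf M w = qf M w0 + qf M d" using c1 c2 by simp
  have "0 \<le> Re (qf M d)"
  proof (cases "d = 0")
    case True then show ?thesis by (simp add: qf_def ip_def)
  next
    case False then show ?thesis using pd by (auto simp: pd_def less_imp_le)
  qed
  then show ?thesis using e by simp
qed

lemma ratio_le:
  assumes pd: "pd M" and tP: "t \<in> P" and w: "w$t = 1" "\<forall>i. i \<notin> P \<longrightarrow> w$i = 0"
  shows "Re (det (pad M P)) \<le> Re (det (pad M (P - {t}))) * Re (qf M w)"
proof -
  obtain w0 where w0: "w0$t = 1" "\<forall>i. i \<notin> P \<longrightarrow> w0$i = 0" "\<forall>i\<in>P-{t}. (M *v w0)$i = 0"
     "det (pad M P) = det (pad M (P - {t})) * qf M w0"
    using ratio_exists[OF pd tP] by blast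
  have p1: "posr (det (pad M (P - {t})))" by (rule pd_det_pos[OF pd])
  have "w0 \<noteq> 0" using w0(1) by auto
  then have p2: "posr (qf M w0)" using pd_qf_posr[OF pd] by blast
  have "Re (det (pad M P)) = Re (det (pad M (P - {t}))) * Re (qf M w0)"
    using w0(4) p1 p2 by (simp add: posr_def)
  also have "\<dots> \<le> Re (det (pad M (P - {t}))) * Re (qf M w)"
    using qf_min[OF pd w0(1-3) w] p1 by (simp add: posr_def)
  finally show ?thesis .
qed



lemma loewner:
  assumes pd1: "pd M" and pd2: "pd M'" and le: "\<And>x. Re (qf M x) \<le> Re (qf M' x)"
  shows "Re (det (pad M P)) \<le> Re (det (pad M' P))"
  using finite[of P]
proof (induct P rule: finite_induct)
  case empty then show ?case by simp
next
  case (insert t P)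
  have e: "insert t P - {t} = P" using insert by auto
  obtain w where w: "w$t = 1" "\<forall>i. i \<notin> insert t P \<longrightarrow> w$i = 0"
     "det (pad M' (insert t P)) = det (pad M' P) * qf M' w"
    using ratio_exists[OF pd2, of t "insert t P"] e by auto
  have p1: "posr (det (pad M P))" by (rule pd_det_pos[OF pd1])
  have p2: "posr (det (pad M' P))" by (rule pd_det_pos[OF pd2])
  have "w \<noteq> 0" using w(1) by auto
  then have p3: "posr (qf M' w)" "posr (qf M w)" using pd_qf_posr pd1 pd2 by blast+
  have "Re (det (pad M (insert t P))) \<le> Re (det (pad M P)) * Re (qf M w)"
    using ratio_le[OF pd1 _ w(1,2)] e by simp
  also have "\<dots> \<le> Re (det (pad M P)) * Re (qf M' w)"
    using le[of w] p1 by (simp add: posr_def)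
  also have "\<dots> \<le> Re (det (pad M' P)) * Re (qf M' w)"
    using insert(3) p3 by (simp add: posr_def)
  also have "\<dots> = Re (det (pad M' (insert t P)))"
    using w(3) p2 p3 by (simp add: posr_def)
  finally show ?case .
qed

lemma fischer:
  fixes f :: "'m::finite \<Rightarrow> 'c"
  assumes pd: "pd M"
  shows "Re (det (pad M P)) \<le> (\<Prod>c\<in>f ` UNIV. Re (det (pad M (P \<inter> {i. f i = c}))))"
  using finite[of P]
proof (induct P rule: finite_induct)
  case empty then show ?case by simp
next
  case (insert t P)
  define c0 where "c0 = f t"
  define Q where "Q = P \<inter> {i. f i = c0}"
  define R where "R = (\<Prod>c\<in>f ` UNIV - {c0}. Re (det (pad M (P \<inter> {i. f i = c}))))"
  have fin: "finite (f ` UNIV)" by simp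
  have c0in: "c0 \<in> f ` UNIV" by (simp add: c0_def)
  have tQ: "t \<notin> Q" using insert by (simp add: Q_def)
  have insQ: "insert t P \<inter> {i. f i = c0} = insert t Q" by (auto simp: Q_def c0_def)
  have prod1: "(\<Prod>c\<in>f ` UNIV. Re (det (pad M (P \<inter> {i. f i = c})))) = Re (det (pad M Q)) * R"
    unfolding R_def Q_def by (rule prod.remove[OF fin c0in])
  have prod2: "(\<Prod>c\<in>f ` UNIV. Re (det (pad M (insert t P \<inter> {i. f i = c}))))
      = Re (det (pad M (insert t Q))) * R"
  proof -
    have "(\<Prod>c\<in>f ` UNIV. Re (det (pad M (insert t P \<inter> {i. f i = c}))))
       = Re (det (pad M (insert t P \<inter> {i. f i = c0}))) *
         (\<Prod>c\<in>f ` UNIV - {c0}. Re (det (pad M (insert t P \<inter> {i. f i = c}))))"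
      by (rule prod.remove[OF fin c0in])
    also have "(\<Prod>c\<in>f ` UNIV - {c0}. Re (det (pad M (insert t P \<inter> {i. f i = c})))) = R"
      unfolding R_def
    proof (rule prod.cong[OF refl])
      fix c assume "c \<in> f ` UNIV - {c0}"
      then have "insert t P \<inter> {i. f i = c} = P \<inter> {i. f i = c}" by (auto simp: c0_def)
      then show "Re (det (pad M (insert t P \<inter> {i. f i = c}))) = Re (det (pad M (P \<inter> {i. f i = c})))"
        by simp
    qed
    finally show ?thesis using insQ by simp
  qed
  have eQ: "insert t Q - {t} = Q" using tQ by auto
  obtain w where w: "w$t = 1" "\<forall>i. i \<notin> insert t Q \<longrightarrow> w$i = 0"
     "det (pad M (insert t Q)) = det (pad M Q) * qf M w"
    using ratio_exists[OF pd, of t "insert t Q"] eQ by auto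
  have w2: "\<forall>i. i \<notin> insert t P \<longrightarrow> w$i = 0" using w(2) by (auto simp: Q_def)
  have e: "insert t P - {t} = P" using insert by auto
  have "w \<noteq> 0" using w(1) by auto
  then have p3: "posr (qf M w)" using pd_qf_posr pd by blast
  have p4: "posr (det (pad M Q))" by (rule pd_det_pos[OF pd])
  have "Re (det (pad M (insert t P))) \<le> Re (det (pad M P)) * Re (qf M w)"
    using ratio_le[OF pd _ w(1) w2] e by simp
  also have "\<dots> \<le> (Re (det (pad M Q)) * R) * Re (qf M w)"
    using insert(3) prod1 p3 by (simp add: posr_def)
  also have "\<dots> = Re (det (pad M (insert t Q))) * R"
    using w(3) p3 p4 by (simp add: posr_def)
  finally show ?case using prod2 by simp
qed

lemma cross_type:
  fixes M :: "complex^'m::finite^'m" and g :: "'n::finite \<Rightarrow> 'm"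
  assumes pd: "pd M" and inj: "inj g"
  shows "det (\<chi> i j. M$(g i)$(g j)) = det (pad M (range g))"
proof -
  define M' :: "complex^'n^'n" where "M' = (\<chi> i j. M$(g i)$(g j))"
  have key: "\<And>w i. (\<forall>m. m \<notin> range g \<longrightarrow> w$m = 0) \<Longrightarrow>
      (M' *v (\<chi> j. w$(g j)))$i = (M *v w)$(g i)"
  proof -
    fix w :: "complex^'m" and i
    assume z: "\<forall>m. m \<notin> range g \<longrightarrow> w$m = 0"
    have "(M' *v (\<chi> j. w$(g j)))$i = (\<Sum>j\<in>UNIV. M$(g i)$(g j) * w$(g j))"
      by (simp add: M'_def matrix_vector_mult_def)
    also have "\<dots> = (\<Sum>m\<in>range g. M$(g i)$m * w$m)"
      using sum.reindex[OF inj, of "\<lambda>m. M$(g i)$m * w$m"]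
      by (simp add: comp_def)
    also have "\<dots> = (\<Sum>m\<in>UNIV. M$(g i)$m * w$m)"
      using z by (intro sum.mono_neutral_left) auto
    finally show "(M' *v (\<chi> j. w$(g j)))$i = (M *v w)$(g i)"
      by (simp add: matrix_vector_mult_def)
  qed
  have "det (pad M' Q) = det (pad M (g ` Q))" for Q
    using finite[of Q]
  proof (induct Q rule: finite_induct)
    case empty then show ?case by simp
  next
    case (insert t Q)
    have gt: "g t \<notin> g ` Q" using insert inj by (auto simp: inj_eq)
    have e1: "g ` insert t Q - {g t} = g ` Q" using gt by auto
    have e2: "insert t Q - {t} = Q" using insert by auto
    have "posr (det (pad M (g ` Q)))" by (rule pd_det_pos[OF pd])
    then have "det (pad M (g ` insert t Q - {g t})) \<noteq> 0" using e1 by (auto simp: posr_def)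
    then obtain w where w: "w$(g t) = 1" "\<forall>i. i \<notin> g ` insert t Q \<longrightarrow> w$i = 0"
        "\<forall>i\<in>g ` insert t Q - {g t}. (M *v w)$i = 0"
      using ortho_exists[of "g t" "g ` insert t Q" M] by auto
    define w' :: "complex^'n" where "w' = (\<chi> j. w$(g j))"
    have z: "\<forall>m. m \<notin> range g \<longrightarrow> w$m = 0" using w(2) by auto
    have w'1: "w'$t = 1" using w(1) by (simp add: w'_def)
    have w'2: "\<forall>i. i \<notin> insert t Q \<longrightarrow> w'$i = 0"
    proof (intro allI impI)
      fix i assume "i \<notin> insert t Q"
      then have "g i \<notin> g ` insert t Q" using inj by (auto simp: inj_image_mem_iff inj_eq)
      then show "w'$i = 0" using w(2) by (simp add: w'_def)
    qed
    have w'3: "\<forall>i\<in>insert t Q - {t}. (M' *v w')$i = 0"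
      using w(3) key[OF z] e1 e2 by (auto simp: w'_def)
    have "det (pad M' (insert t Q)) = det (pad M' Q) * (M' *v w')$t"
      using schur_step[of t "insert t Q" w' M'] w'1 w'2 w'3 e2 by simp
    also have "\<dots> = det (pad M (g ` Q)) * (M *v w)$(g t)"
      using insert(3) key[OF z] by (simp add: w'_def)
    also have "\<dots> = det (pad M (g ` insert t Q))"
      using schur_step[of "g t" "g ` insert t Q" w M] w e1 by simp
    finally show ?case .
  qed
  from this[of UNIV] show ?thesis by (simp add: M'_def)
qed



definition rp :: "complex^'m^'m \<Rightarrow> complex^'m^'m" where
  "rp A = (\<chi> i j. (A$i$j + cnj (A$j$i)) / 2)"
definition ipt :: "complex^'m^'m \<Rightarrow> complex^'m^'m" where
  "ipt A = (\<chi> i j. (A$i$j - cnj (A$j$i)) / (2 * \<i>))"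
definition sm :: "complex \<Rightarrow> complex^'m^'m \<Rightarrow> complex^'m^'m" where
  "sm c M = (\<chi> i j. c * M$i$j)"

lemma ct_ct[simp]: "ct (ct A) = A" by (simp add: ct_def vec_eq_iff)

lemma qf_ct: "qf (ct A) x = cnj (qf A x)"
proof -
  have "qf (ct A) x = ip (ct (ct A) *v x) x" unfolding qf_def by (rule ip_mat)
  also have "\<dots> = cnj (qf A x)" unfolding qf_def ct_ct by (rule ip_cnj)
  finally show ?thesis .
qed

lemma qf_lin: "qf (\<chi> i j. c * X$i$j + d * Y$i$j) x = c * qf X x + d * qf Y x"
  unfolding qf_def ip_def matrix_vector_mult_def
  by (simp add: ring_distribs sum.distrib sum_distrib_left mult_ac)

lemma qf_rp: "qf (rp A) x = of_real (Re (qf A x))"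
proof -
  have "rp A = (\<chi> i j. (1/2) * A$i$j + (1/2) * (ct A)$i$j)"
    by (simp add: rp_def ct_def vec_eq_iff field_simps)
  then have "qf (rp A) x = (1/2) * qf A x + (1/2) * qf (ct A) x"
    by (simp only: qf_lin)
  then have "qf (rp A) x = (1/2) * qf A x + (1/2) * cnj (qf A x)"
    by (simp only: qf_ct)
  also have "\<dots> = of_real (Re (qf A x))"
    by (simp add: complex_eq_iff)
  finally show ?thesis .
qed

lemma qf_ipt: "qf (ipt A) x = of_real (Im (qf A x))"
proof -
  have "ipt A = (\<chi> i j. (1/(2*\<i>)) * A$i$j + (-1/(2*\<i>)) * (ct A)$i$j)"
    by (simp add: ipt_def ct_def vec_eq_iff field_simps)
  then have "qf (ipt A) x = (1/(2*\<i>)) * qf A x + (-1/(2*\<i>)) * qf (ct A) x"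
    by (simp only: qf_lin)
  then have "qf (ipt A) x = (1/(2*\<i>)) * qf A x + (-1/(2*\<i>)) * cnj (qf A x)"
    by (simp only: qf_ct)
  also have "\<dots> = (qf A x - cnj (qf A x)) / (2 * \<i>)"
    by (simp add: field_simps)
  also have "\<dots> = of_real (Im (qf A x))"
    unfolding complex_diff_cnj by (simp add: complex_eq_iff)
  finally show ?thesis .
qed

lemma ct_rp: "ct (rp A) = rp A"
  by (simp add: ct_def rp_def vec_eq_iff add.commute)

lemma ct_ipt: "ct (ipt A) = ipt A"
  by (simp add: ct_def ipt_def vec_eq_iff field_simps)

lemma ct_mult: "ct (X ** Y) = ct Y ** ct X"
  by (simp add: ct_def matrix_matrix_mult_def vec_eq_iff mult.commute)

lemma ct_mat1[simp]: "ct (mat 1) = mat 1"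
  by (simp add: ct_def mat_def vec_eq_iff)

lemma det_cnj: "det (\<chi> i j. cnj (A$i$j)) = cnj (det A)"
  by (simp add: det_def)

lemma det_ct: "det (ct A) = cnj (det A)"
proof -
  have "ct A = transpose (\<chi> i j. cnj (A$i$j))"
    by (simp add: ct_def transpose_def vec_eq_iff)
  then show ?thesis by (simp add: det_cnj)
qed

lemma det_sm: "det (sm c (M::complex^'m^'m)) = c ^ CARD('m) * det M"
proof -
  have e: "sm c M = (\<chi> i. c *s M$i)"
    by (simp add: sm_def vec_eq_iff)
  have "det (\<chi> i. c *s M$i) = (\<Prod>i\<in>(UNIV::'m set). c) * det (\<chi> i. M$i)"
    using det_rows_mul[of "\<lambda>i::'m. c" "\<lambda>i. M$i"] by simp
  moreover have "(\<chi> i. M$i) = M" by (simp add: vec_eq_iff)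
  ultimately show ?thesis unfolding e by simp
qed

lemma qf_sm: "qf (sm c M) x = c * qf M x"
  unfolding qf_def ip_def matrix_vector_mult_def sm_def
  by (simp add: sum_distrib_left mult_ac)

lemma ct_sm_real: "ct (sm (of_real r) M) = sm (of_real r) (ct M)"
  by (simp add: ct_def sm_def vec_eq_iff)

lemma mv_lin: "(\<chi> i j. X$i$j - c * Y$i$j) *v x = X *v x - c *s (Y *v (x::complex^'m))"
  by (simp add: vec_eq_iff matrix_vector_mult_def left_diff_distrib sum_subtractf sum_distrib_left mult.assoc)

lemma ctA_mv: "ct A *v x = rp A *v x - \<i> *s (ipt A *v x)"
proof -
  have "ct A = (\<chi> i j. (rp A)$i$j - \<i> * (ipt A)$i$j)"
    by (simp add: vec_eq_iff ct_def rp_def ipt_def field_simps)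
  then show ?thesis by (simp only: mv_lin)
qed



lemma real_key:
  fixes X Q t :: real
  assumes X: "X > 0" and Q: "Q \<ge> 0" and t: "t \<ge> 0"
    and h: "\<And>r. r > 0 \<Longrightarrow> 2 * Q \<le> t * (r^2 * X + Q / r^2)"
  shows "Q \<le> t^2 * X"
proof (cases "Q = 0")
  case True then show ?thesis using X t by simp
next
  case False
  then have Qp: "Q > 0" using Q by simp
  show ?thesis
  proof (cases "t = 0")
    case True
    then show ?thesis using h[of 1] Qp by simp
  next
    case False
    then have tp: "t > 0" using t by simp
    define r where "r = sqrt (Q / (t * X))"
    have rp: "r > 0" using Qp tp X by (simp add: r_def)
    have r2: "r^2 = Q / (t * X)" using Qp tp X by (simp add: r_def)
    have "t * (r^2 * X + Q / r^2) = Q + t^2 * X"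
      using Qp tp X unfolding r2 by (simp add: field_simps power2_eq_square)
    then show ?thesis using h[OF rp] by simp
  qed
qed

lemma qf_zero[simp]: "qf M 0 = 0" by (simp add: qf_def ip_def)

lemma sector_main:
  fixes A :: "complex^'m^'m" and t :: real
  assumes pos: "\<And>x. x \<noteq> 0 \<Longrightarrow> Re (qf A x) > 0"
    and bnd: "\<And>x. x \<noteq> 0 \<Longrightarrow> \<bar>Im (qf A x)\<bar> \<le> t * Re (qf A x)"
    and t0: "t \<ge> 0"
  shows "posr (det (rp A)) \<and> Re (det (rp A)) \<le> cmod (det A) \<and>
         (cmod (det A))^2 \<le> (1 + t^2)^CARD('m) * (Re (det (rp A)))^2"
proof -
  define B where "B = rp A"
  define C where "C = ipt A"
  have qB: "\<And>x. qf B x = of_real (Re (qf A x))" by (simp add: B_def qf_rp)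
  have qC: "\<And>x. qf C x = of_real (Im (qf A x))" by (simp add: C_def qf_ipt)
  have bndall: "\<And>z. \<bar>Re (qf C z)\<bar> \<le> t * Re (qf B z)"
  proof -
    fix z show "\<bar>Re (qf C z)\<bar> \<le> t * Re (qf B z)"
      by (cases "z = 0") (simp_all add: qC qB bnd)
  qed
  have hB: "ct B = B" by (simp add: B_def ct_rp)
  have hC: "ct C = C" by (simp add: C_def ct_ipt)
  have pdB: "pd B" unfolding pd_def using hB pos qB by simp
  have pB: "posr (det B)" using pd_det_pos[OF pdB, of UNIV] by simp
  then have "det B \<noteq> 0" by (auto simp: posr_def)
  then obtain Bi where BBi: "B ** Bi = mat 1" and BiB: "Bi ** B = mat 1"
    unfolding invertible_det_nz[symmetric] invertible_def by blast
  have hBi: "ct Bi = Bi"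
  proof -
    have "ct (Bi ** B) = mat 1" using BiB by simp
    then have e: "B ** ct Bi = mat 1" using hB by (simp add: ct_mult)
    have "ct Bi = (Bi ** B) ** ct Bi" using BiB by simp
    also have "\<dots> = Bi ** (B ** ct Bi)" by (simp add: matrix_mul_assoc)
    finally show ?thesis using e by simp
  qed
  define M2 where "M2 = A ** Bi ** ct A"
  have hM2: "ct M2 = M2"
    unfolding M2_def by (simp add: ct_mult hBi matrix_mul_assoc)
  have key: "Re (qf B x) \<le> Re (qf M2 x) \<and> Re (qf M2 x) \<le> (1 + t^2) * Re (qf B x)" for x
  proof -
    define u where "u = ct A *v x"
    define y where "y = Bi *v u"
    define v where "v = Bi *v (C *v x)"
    have By: "B *v y = u" unfolding y_def matrix_vector_mul_assoc BBi by simp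
    have "B *v v = (B ** Bi) *v (C *v x)" unfolding v_def by (rule matrix_vector_mul_assoc)
    then have Bv: "B *v v = C *v x" using BBi by simp
    have q1: "qf M2 x = qf B y"
    proof -
      have "M2 *v x = A *v y"
        by (simp add: M2_def y_def u_def matrix_vector_mul_assoc matrix_mul_assoc)
      then have "qf M2 x = ip (ct A *v x) y" unfolding qf_def by (simp add: ip_mat)
      also have "\<dots> = ip (B *v y) y" using By u_def by simp
      also have "\<dots> = qf B y" unfolding qf_def using ip_mat[of y B y] hB by simp
      finally show ?thesis .
    qed
    have yv: "y = x - \<i> *s v"
    proof -
      have "u = B *v x - \<i> *s (C *v x)" by (simp add: u_def ctA_mv B_def C_def)
      then have "y = (Bi ** B) *v x - \<i> *s (Bi *v (C *v x))"
        by (simp add: y_def matrix_vector_mult_diff_distrib mv_smult matrix_vector_mul_assoc)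
      then show ?thesis using BiB by (simp add: v_def)
    qed
    define r where "r = qf C x"
    have rr: "Im r = 0" unfolding r_def using herm_qf_real[OF hC] .
    have i1: "ip x (B *v v) = r" by (simp add: Bv r_def qf_def)
    have i2: "ip v (B *v x) = r"
    proof -
      have "ip v (B *v x) = ip (B *v v) x" using ip_mat[of v B x] hB by simp
      also have "\<dots> = cnj r" unfolding Bv r_def qf_def by (rule ip_cnj)
      also have "\<dots> = r" using rr by (simp add: complex_eq_iff)
      finally show ?thesis .
    qed
    have q2: "qf B y = qf B x + qf B v"
    proof -
      have "qf B y = ip (x - \<i> *s v) (B *v x - \<i> *s (B *v v))"
        unfolding qf_def yv by (simp add: matrix_vector_mult_diff_distrib mv_smult)
      also have "\<dots> = qf B x - \<i> * r - (- \<i> * r - qf B v)"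
        by (simp add: ip_diff_left ip_diff_right ip_smult_left ip_smult_right i1 i2 qf_def
            algebra_simps complex_i_mult_minus)
      also have "\<dots> = qf B x + qf B v" by simp
      finally show ?thesis .
    qed
    have vreal: "Im (qf B v) = 0" using herm_qf_real[OF hB] .
    have lo: "0 \<le> Re (qf B v)"
    proof (cases "v = 0")
      case True then show ?thesis by simp
    next
      case False then show ?thesis using pdB by (auto simp: pd_def less_imp_le)
    qed
    have up: "Re (qf B v) \<le> t^2 * Re (qf B x)"
    proof (cases "x = 0")
      case True
      then have "v = 0" by (simp add: v_def)
      then show ?thesis using True by simp
    next
      case False
      define X where "X = Re (qf B x)"
      define Q where "Q = Re (qf B v)"
      have Xp: "X > 0" using pdB False by (simp add: pd_def X_def)
      have icv: "ip x (C *v v) = qf B v"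
      proof -
        have "ip x (C *v v) = ip (C *v x) v" using ip_mat[of x C v] hC by simp
        also have "\<dots> = cnj (qf B v)" unfolding Bv[symmetric] qf_def by (rule ip_cnj)
        also have "\<dots> = qf B v" using vreal by (simp add: complex_eq_iff)
        finally show ?thesis .
      qed
      have polar: "2 * Q \<le> t * (s^2 * X + Q / s^2)" if sp: "s > 0" for s
      proof -
        define a where "a = of_real s *s x"
        define b where "b = of_real (1/s) *s v"
        have ab: "ip a (C *v b) = qf B v"
          using sp by (simp add: a_def b_def mv_smult ip_smult_left ip_smult_right icv)
        have ba: "ip b (C *v a) = cnj (ip a (C *v b))"
        proof -
          have "ip b (C *v a) = ip (C *v b) a" using ip_mat[of b C a] hC by simp
          then show ?thesis by (simp add: ip_cnj[of "C *v b" a])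
        qed
        have diffC: "qf C (a + b) - qf C (a - b) = 2 * (ip a (C *v b) + ip b (C *v a))"
          unfolding qf_def
          by (simp add: matrix_vector_right_distrib matrix_vector_mult_diff_distrib
              ip_add_left ip_add_right ip_diff_left ip_diff_right algebra_simps)
        have sumB: "qf B (a + b) + qf B (a - b) = 2 * qf B a + 2 * qf B b"
          unfolding qf_def
          by (simp add: matrix_vector_right_distrib matrix_vector_mult_diff_distrib
              ip_add_left ip_add_right ip_diff_left ip_diff_right algebra_simps)
        have qa: "Re (qf B a) = s^2 * X"
          unfolding a_def X_def qf_def by (simp add: mv_smult ip_smult_left ip_smult_right power2_eq_square)
        have qb: "Re (qf B b) = Q / s^2"
          unfolding b_def Q_def qf_def by (simp add: mv_smult ip_smult_left ip_smult_right power2_eq_square)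
        have "4 * Q = Re (qf C (a + b)) - Re (qf C (a - b))"
        proof -
          have "Re (qf C (a + b) - qf C (a - b)) = 4 * Re (qf B v)"
            unfolding diffC ba ab by simp
          then show ?thesis by (simp add: Q_def)
        qed
        also have "\<dots> \<le> t * Re (qf B (a + b)) + t * Re (qf B (a - b))"
          using bndall[of "a + b"] bndall[of "a - b"] by linarith
        also have "\<dots> = t * (2 * (s^2 * X) + 2 * (Q / s^2))"
        proof -
          have "Re (qf B (a + b)) + Re (qf B (a - b)) = 2 * Re (qf B a) + 2 * Re (qf B b)"
            using arg_cong[OF sumB, of Re] by simp
          then have "Re (qf B (a + b)) + Re (qf B (a - b)) = 2 * (s^2 * X) + 2 * (Q / s^2)"
            unfolding qa qb by simp
          then show ?thesis by (metis distrib_left)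
        qed
        finally have h4: "4 * Q \<le> t * (2 * (s^2 * X) + 2 * (Q / s^2))" .
        have "t * (2 * (s^2 * X) + 2 * (Q / s^2)) = 2 * (t * (s^2 * X + Q / s^2))"
          by (simp only: distrib_left mult.left_commute)
        then show ?thesis using h4 by linarith
      qed
      have "Q \<le> t^2 * X"
        by (rule real_key[OF Xp _ t0 polar]) (use lo Q_def in simp)
      then show ?thesis by (simp add: Q_def X_def)
    qed
    have "Re (qf M2 x) = Re (qf B x) + Re (qf B v)" using q1 q2 by simp
    then show ?thesis using lo up by (simp add: algebra_simps)
  qed
  have pdM2: "pd M2"
    unfolding pd_def using hM2 key pdB by (auto simp: pd_def intro: less_le_trans)
  define c where "c = 1 + t^2"
  define S where "S = sm (of_real c) B"
  have cS: "ct S = S" unfolding S_def by (simp only: ct_sm_real hB)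
  have qS: "Re (qf S x) = c * Re (qf B x)" for x unfolding S_def qf_sm by simp
  have cp: "c > 0" by (simp add: c_def add_pos_nonneg)
  have pdS: "pd S"
    unfolding pd_def using cS qS cp pdB by (auto simp: pd_def)
  have l1: "Re (det B) \<le> Re (det M2)"
    using loewner[OF pdB pdM2, of UNIV] key by simp
  have l2: "Re (det M2) \<le> Re (det S)"
    using loewner[OF pdM2 pdS, of UNIV] key by (simp add: qS c_def)
  have dS: "Re (det S) = c ^ CARD('m) * Re (det B)"
    unfolding S_def det_sm by (simp flip: of_real_power)
  have dM2: "det M2 = det A * det Bi * cnj (det A)"
    unfolding M2_def by (simp add: det_mul det_ct)
  have dBi: "det B * det Bi = 1" using det_mul[of B Bi] BBi by simp
  have "det M2 * det B = det A * cnj (det A)" using dM2 dBi by (simp add: algebra_simps)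
  also have "\<dots> = of_real ((cmod (det A))^2)" by (metis complex_norm_square of_real_power)
  finally have e: "det M2 * det B = of_real ((cmod (det A))^2)" .
  have pM2: "posr (det M2)" using pd_det_pos[OF pdM2, of UNIV] by simp
  have K2: "(cmod (det A))^2 = Re (det M2) * Re (det B)"
    using arg_cong[OF e, of Re] pM2 pB by (simp add: posr_def)
  define D where "D = Re (det B)"
  define E where "E = Re (det M2)"
  have Dp: "D > 0" using pB by (simp add: posr_def D_def)
  have "D^2 \<le> (cmod (det A))^2"
    using K2 l1 Dp unfolding D_def[symmetric] E_def[symmetric]
    by (simp add: power2_eq_square mult_right_mono)
  then have lowK: "D \<le> cmod (det A)"
    by (rule power2_le_imp_le) simp
  have "(cmod (det A))^2 \<le> c ^ CARD('m) * D^2"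
    using K2 l2 dS Dp unfolding D_def[symmetric] E_def[symmetric]
    by (simp add: power2_eq_square mult_right_mono)
  then show ?thesis using pB lowK by (simp add: D_def B_def c_def)
qed



lemma sector_cos:
  fixes A :: "complex^'m^'m" and \<alpha> :: real
  assumes sec: "\<And>x. x \<noteq> 0 \<Longrightarrow> qf A x \<in> sector \<alpha>"
    and a0: "0 \<le> \<alpha>" and a1: "\<alpha> < pi / 2"
  shows "cos \<alpha> ^ CARD('m) * cmod (det A) \<le> Re (det (rp A)) \<and> Re (det (rp A)) \<le> cmod (det A)
    \<and> posr (det (rp A))"
proof -
  define t where "t = tan \<alpha>"
  have t0: "t \<ge> 0"
  proof (cases "\<alpha> = 0")
    case True then show ?thesis by (simp add: t_def)
  next
    case False then show ?thesis using a0 a1 tan_gt_zero[of \<alpha>] by (simp add: t_def)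
  qed
  have cp: "cos \<alpha> > 0" using a0 a1 by (intro cos_gt_zero_pi) auto
  have pos: "\<And>x. x \<noteq> 0 \<Longrightarrow> Re (qf A x) > 0" using sec by (simp add: sector_def)
  have bnd: "\<And>x. x \<noteq> 0 \<Longrightarrow> \<bar>Im (qf A x)\<bar> \<le> t * Re (qf A x)"
    using sec by (simp add: sector_def t_def mult.commute)
  have m: "posr (det (rp A)) \<and> Re (det (rp A)) \<le> cmod (det A) \<and>
         (cmod (det A))^2 \<le> (1 + t^2)^CARD('m) * (Re (det (rp A)))^2"
    by (rule sector_main[OF pos bnd t0])
  define D where "D = Re (det (rp A))"
  define K where "K = cmod (det A)"
  define N where "N = CARD('m)"
  have Dp: "D \<ge> 0" using m by (simp add: posr_def D_def)
  have ct: "(cos \<alpha>)^2 * (1 + t^2) = 1"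
    using tan_sec[of \<alpha>] cp by (simp add: t_def field_simps)
  have "(cos \<alpha> ^ N * K)^2 = ((cos \<alpha>)^2)^N * K^2"
    by (simp add: power_mult_distrib power_mult[symmetric] mult.commute)
  also have "\<dots> \<le> ((cos \<alpha>)^2)^N * ((1 + t^2)^N * D^2)"
    using m by (intro mult_left_mono) (simp_all add: D_def K_def N_def)
  also have "\<dots> = ((cos \<alpha>)^2 * (1 + t^2))^N * D^2"
    by (simp add: power_mult_distrib)
  also have "\<dots> = D^2" using ct by simp
  finally have "cos \<alpha> ^ N * K \<le> D"
    using Dp by (rule power2_le_imp_le)
  then show ?thesis using m by (simp add: D_def K_def N_def)
qed

lemma qf_expand: "qf A x = (\<Sum>i\<in>UNIV. \<Sum>j\<in>UNIV. cnj (x $ i) * A $ i $ j * x $ j)"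
  by (simp add: qf_def ip_def matrix_vector_mult_def sum_distrib_left mult.assoc)

lemma qf_scale: "qf A (of_real s *s x) = of_real (s^2) * qf A x"
  unfolding qf_def by (simp add: mv_smult ip_smult_left ip_smult_right power2_eq_square)

lemma sector_scale: "z \<in> sector \<alpha> \<Longrightarrow> c > 0 \<Longrightarrow> of_real c * z \<in> sector \<alpha>"
  by (simp add: sector_def abs_mult mult.assoc mult_left_mono)

lemma nr_qf:
  assumes nr: "numerical_range A \<subseteq> sector \<alpha>" and x: "x \<noteq> 0"
  shows "qf A x \<in> sector \<alpha>"
proof -
  define S where "S = (\<Sum>i\<in>UNIV. cmod (x $ i) ^ 2)"
  have Sp: "S > 0"
  proof -
    have "S \<ge> 0" unfolding S_def by (simp add: sum_nonneg)
    moreover have "S \<noteq> 0"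
    proof
      assume "S = 0"
      then have "\<forall>i\<in>UNIV. cmod (x $ i) ^ 2 = 0"
        unfolding S_def by (subst (asm) sum_nonneg_eq_0_iff) auto
      then have "x = 0" by (simp add: vec_eq_iff)
      then show False using x by simp
    qed
    ultimately show ?thesis by simp
  qed
  define \<rho> where "\<rho> = sqrt S"
  have \<rho>p: "\<rho> > 0" using Sp by (simp add: \<rho>_def)
  define y where "y = of_real (1/\<rho>) *s x"
  have "(\<Sum>i\<in>UNIV. cmod (y $ i) ^ 2) = S / \<rho>^2"
    unfolding S_def y_def using \<rho>p by (simp add: norm_divide power_divide sum_divide_distrib)
  also have "\<dots> = 1" using Sp \<rho>p by (simp add: \<rho>_def)
  finally have yn: "(\<Sum>i\<in>UNIV. cmod (y $ i) ^ 2) = 1" .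
  have "qf A y \<in> numerical_range A"
    unfolding numerical_range_def qf_expand using yn by blast
  then have "qf A y \<in> sector \<alpha>" using nr by blast
  then have "of_real (\<rho>^2) * qf A y \<in> sector \<alpha>" using \<rho>p by (intro sector_scale) auto
  moreover have "of_real (\<rho>^2) * qf A y = qf A x"
    unfolding y_def qf_scale using \<rho>p
    by (simp add: power_divide field_simps flip: of_real_mult of_real_power)
  ultimately show ?thesis by simp
qed

definition ext :: "('n \<Rightarrow> 'm) \<Rightarrow> complex^'n \<Rightarrow> complex^'m" where
  "ext g x = (\<chi> m. if m \<in> range g then x $ (inv g m) else 0)"

lemma ext_g: "inj g \<Longrightarrow> ext g x $ g i = x $ i"
  by (simp add: ext_def inv_f_f)

lemma sum_range:
  fixes F :: "'m::finite \<Rightarrow> 'a::comm_monoid_add" and g :: "'n::finite \<Rightarrow> 'm"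
  assumes "inj g" "\<And>m. m \<notin> range g \<Longrightarrow> F m = 0"
  shows "(\<Sum>m\<in>UNIV. F m) = (\<Sum>i\<in>UNIV. F (g i))"
proof -
  have "(\<Sum>m\<in>UNIV. F m) = (\<Sum>m\<in>range g. F m)"
    using assms(2) by (intro sum.mono_neutral_right) auto
  also have "\<dots> = (\<Sum>i\<in>UNIV. F (g i))"
    using sum.reindex[OF assms(1), of F] by (simp add: comp_def)
  finally show ?thesis .
qed

lemma sub_qf:
  fixes A :: "complex^'m::finite^'m" and g :: "'n::finite \<Rightarrow> 'm"
  assumes inj: "inj g"
  shows "qf (\<chi> i j. A$(g i)$(g j)) x = qf A (ext g x)"
proof -
  have out: "\<And>m. m \<notin> range g \<Longrightarrow> ext g x $ m = 0" by (simp add: ext_def)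
  have inner: "(A *v ext g x) $ m = (\<Sum>j\<in>UNIV. A$m$(g j) * x$j)" for m
  proof -
    have "(A *v ext g x) $ m = (\<Sum>m'\<in>UNIV. A$m$m' * ext g x $ m')"
      by (simp add: matrix_vector_mult_def)
    also have "\<dots> = (\<Sum>j\<in>UNIV. A$m$(g j) * ext g x $ (g j))"
      by (rule sum_range[OF inj]) (simp add: out)
    finally show ?thesis by (simp add: ext_g[OF inj])
  qed
  have "qf A (ext g x) = (\<Sum>m\<in>UNIV. cnj (ext g x $ m) * (A *v ext g x) $ m)"
    by (simp add: qf_def ip_def)
  also have "\<dots> = (\<Sum>i\<in>UNIV. cnj (ext g x $ g i) * (A *v ext g x) $ g i)"
    by (rule sum_range[OF inj]) (simp add: out)
  also have "\<dots> = (\<Sum>i\<in>UNIV. cnj (x $ i) * (\<Sum>j\<in>UNIV. A$(g i)$(g j) * x$j))"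
    by (simp only: inner ext_g[OF inj])
  also have "\<dots> = qf (\<chi> i j. A$(g i)$(g j)) x"
    by (simp add: qf_def ip_def matrix_vector_mult_def)
  finally show ?thesis by simp
qed

lemma ext_nz: "inj g \<Longrightarrow> x \<noteq> 0 \<Longrightarrow> ext g x \<noteq> 0"
  by (metis ext_g vec_eq_iff zero_index)

lemma pd_rp: "(\<And>x. x \<noteq> 0 \<Longrightarrow> Re (qf A x) > 0) \<Longrightarrow> pd (rp A)"
  by (simp add: pd_def ct_rp qf_rp)

lemma chain_gen:
  fixes H :: "complex^'m::finite^'m" and f :: "'m \<Rightarrow> 'c" and g :: "'c \<Rightarrow> 'n::finite \<Rightarrow> 'm"
  assumes sec: "\<And>x. x \<noteq> 0 \<Longrightarrow> qf H x \<in> sector \<alpha>"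
    and a0: "0 \<le> \<alpha>" and a1: "\<alpha> < pi / 2"
    and inj: "\<And>c. inj (g c)" and rg: "\<And>c. range (g c) = {i. f i = c}"
  shows "cos \<alpha> ^ CARD('m) * cmod (det H)
     \<le> (\<Prod>c\<in>f ` UNIV. cmod (det (\<chi> i j. H$(g c i)$(g c j))))"
proof -
  define B where "B = rp H"
  have pdB: "pd B" unfolding B_def using sec by (intro pd_rp) (simp add: sector_def)
  have s1: "cos \<alpha> ^ CARD('m) * cmod (det H) \<le> Re (det B)"
    using sector_cos[OF sec a0 a1] by (simp add: B_def)
  have s2: "Re (det B) \<le> (\<Prod>c\<in>f ` UNIV. Re (det (pad B ({i. f i = c}))))"
    using fischer[OF pdB, of UNIV f] by simp
  have s3: "(\<Prod>c\<in>f ` UNIV. Re (det (pad B ({i. f i = c}))))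
      \<le> (\<Prod>c\<in>f ` UNIV. cmod (det (\<chi> i j. H$(g c i)$(g c j))))"
  proof (rule prod_mono)
    fix c
    define G where "G = (\<chi> i j. H$(g c i)$(g c j))"
    have secG: "\<And>x. x \<noteq> 0 \<Longrightarrow> qf G x \<in> sector \<alpha>"
      unfolding G_def using sub_qf[OF inj] sec ext_nz[OF inj] by simp
    have "det (pad B {i. f i = c}) = det (\<chi> i j. B$(g c i)$(g c j))"
      using cross_type[OF pdB inj[of c]] rg[of c] by simp
    also have "(\<chi> i j. B$(g c i)$(g c j)) = rp G"
      by (simp add: B_def G_def rp_def vec_eq_iff)
    finally have e: "det (pad B {i. f i = c}) = det (rp G)" .
    have "posr (det (pad B {i. f i = c}))" by (rule pd_det_pos[OF pdB])
    then show "0 \<le> Re (det (pad B {i. f i = c})) \<and>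
        Re (det (pad B {i. f i = c})) \<le> cmod (det (\<chi> i j. H$(g c i)$(g c j)))"
      using sector_cos[OF secG a0 a1] e by (simp add: posr_def G_def)
  qed
  show ?thesis using s1 s2 s3 by linarith
qed

lemma amgm:
  fixes a :: "'k::finite \<Rightarrow> real"
  assumes "\<And>i. a i \<ge> 0"
  shows "(\<Prod>i\<in>UNIV. a i) \<le> ((\<Sum>i\<in>UNIV. a i) / real CARD('k)) ^ CARD('k)"
proof -
  define k where "k = CARD('k)"
  have kp: "k > 0" by (simp add: k_def)
  define P where "P = (\<Prod>i\<in>UNIV. a i)"
  have P0: "P \<ge> 0" unfolding P_def using assms by (simp add: prod_nonneg)
  have am: "(\<Sum>i\<in>UNIV. a i / k) \<ge> P powr (1 / k)"
    using arith_geom_mean[of "UNIV :: 'k set" a] assms by (simp add: k_def P_def)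
  have "(\<Sum>i\<in>UNIV. a i / k) = (\<Sum>i\<in>UNIV. a i) / k" by (simp add: sum_divide_distrib)
  then have am2: "(\<Sum>i\<in>UNIV. a i) / k \<ge> P powr (1 / k)" using am by simp
  have "(P powr (1 / k)) ^ k = P"
  proof (cases "P = 0")
    case True then show ?thesis using kp by simp
  next
    case False
    then have "P > 0" using P0 by simp
    then have "(P powr (1 / k)) ^ k = (P powr (1/k)) powr (real k)"
      by (simp add: powr_realpow)
    also have "\<dots> = P" using kp P0 by (simp add: powr_powr)
    finally show ?thesis .
  qed
  moreover have "(P powr (1 / k)) ^ k \<le> ((\<Sum>i\<in>UNIV. a i) / k) ^ k"
    using am2 by (intro power_mono) auto
  ultimately show ?thesis by (simp add: P_def k_def)
qed



theorem theorem3p7: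
  fixes H :: "complex ^('n::finite \<times> 'k::finite) ^('n \<times> 'k)" and \<alpha> :: real
  assumes "0 \<le> \<alpha>" and "\<alpha> < pi / 2"
    and "numerical_range H \<subseteq> sector \<alpha>"
  shows "(mtrace (abs_mat (det1 H)) / real CARD('k)) ^ CARD('k)
           \<ge> cos \<alpha> ^ (CARD('n) * CARD('k)) * cmod (det H)
         \<and> (mtrace (abs_mat (det2 H)) / real CARD('n)) ^ CARD('n)
           \<ge> cos \<alpha> ^ (CARD('n) * CARD('k)) * cmod (det H)"
proof -
  have sec: "\<And>x. x \<noteq> 0 \<Longrightarrow> qf H x \<in> sector \<alpha>" by (rule nr_qf[OF assms(3)])
  have card: "CARD('n \<times> 'k) = CARD('n) * CARD('k)"
    by (metis UNIV_Times_UNIV card_cartesian_product)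
  have rs: "range (snd :: 'n \<times> 'k \<Rightarrow> 'k) = UNIV"
    by (metis snd_conv surjI)
  have rf: "range (fst :: 'n \<times> 'k \<Rightarrow> 'n) = UNIV"
    using surjI[of fst "\<lambda>i. (i, undefined)"] by simp
  have c1: "cos \<alpha> ^ CARD('n \<times> 'k) * cmod (det H)
     \<le> (\<Prod>l\<in>snd ` UNIV. cmod (det (\<chi> i j. H$((\<lambda>l i. (i, l)) l i)$((\<lambda>l i. (i, l)) l j))))"
  proof -
    have i1: "\<And>c. inj ((\<lambda>l i. (i, l)) c :: 'n \<Rightarrow> 'n \<times> 'k)" by (auto simp: inj_on_def)
    have r1: "\<And>c. range ((\<lambda>l i. (i, l)) c :: 'n \<Rightarrow> 'n \<times> 'k) = {p. snd p = c}" by auto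
    show ?thesis using chain_gen[OF sec assms(1,2) i1 r1] by simp
  qed
  have c2: "cos \<alpha> ^ CARD('n \<times> 'k) * cmod (det H)
     \<le> (\<Prod>i\<in>fst ` UNIV. cmod (det (\<chi> l m. H$((\<lambda>i l. (i, l)) i l)$((\<lambda>i l. (i, l)) i m))))"
  proof -
    have i1: "\<And>c. inj ((\<lambda>i l. (i, l)) c :: 'k \<Rightarrow> 'n \<times> 'k)" by (auto simp: inj_on_def)
    have r1: "\<And>c. range ((\<lambda>i l. (i, l)) c :: 'k \<Rightarrow> 'n \<times> 'k) = {p. fst p = c}" by auto
    show ?thesis using chain_gen[OF sec assms(1,2) i1 r1] by simp
  qed
  have t1: "mtrace (abs_mat (det1 H)) = (\<Sum>l\<in>UNIV. cmod (det (\<chi> i j. H$(i, l)$(j, l))))"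
    by (simp add: mtrace_def abs_mat_def det1_def Gmat_def)
  have t2: "mtrace (abs_mat (det2 H)) = (\<Sum>i\<in>UNIV. cmod (det (\<chi> l m. H$(i, l)$(i, m))))"
    by (simp add: mtrace_def abs_mat_def det2_def block_def)
  have a1: "(\<Prod>l\<in>UNIV. cmod (det (\<chi> i j. H$(i, l)$(j, l))))
      \<le> ((\<Sum>l\<in>UNIV. cmod (det (\<chi> i j. H$(i, l)$(j, l)))) / real CARD('k)) ^ CARD('k)"
    by (rule amgm) simp
  have a2: "(\<Prod>i\<in>UNIV. cmod (det (\<chi> l m. H$(i, l)$(i, m))))
      \<le> ((\<Sum>i\<in>UNIV. cmod (det (\<chi> l m. H$(i, l)$(i, m)))) / real CARD('n)) ^ CARD('n)"
    by (rule amgm) simp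
  show ?thesis
    using c1 c2 a1 a2 rs rf card t1 t2 by simp
qed


end
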